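(* Assume $q\neq0$. For all integers $n$ and $k$, $$h_{n+k+1}^2-q^{2k+1}h_{n-k}^2=d^2u_{2k+1}\left[\left(b^2-a^2q\right)u_{2n+1}-aq\left(2b-ap\right)u_{2n}\right].$$
   Context: Let $p,q,a,b$ be complex numbers with $q\neq0$, and let $d^2=p^2-4q$. The sequence $(u_n)$ is defined by $u_0=0$, $u_1=1$, $u_n=pu_{n-1}-qu_{n-2}$. The Horadam-Lucas sequence $(h_n)$ is defined by $h_0=2b-ap$, $h_1=bp-2aq$, $h_n=ph_{n-1}-qh_{n-2}$. Both are extended to all integer indices by $x_{n-2}=(px_{n-1}-x_n)/q$. *)

theory Defs
  imports Complex_Main
begin

fun rec_fwd :: "complex \<Rightarrow> complex \<Rightarrow> complex \<Rightarrow> complex \<Rightarrow> nat \<Rightarrow> complex" where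
  "rec_fwd p q x0 x1 0 = x0"
| "rec_fwd p q x0 x1 (Suc 0) = x1"
| "rec_fwd p q x0 x1 (Suc (Suc n)) = p * rec_fwd p q x0 x1 (Suc n) - q * rec_fwd p q x0 x1 n"

text \<open>rec_bwd m is the term of index -m.\<close>
fun rec_bwd :: "complex \<Rightarrow> complex \<Rightarrow> complex \<Rightarrow> complex \<Rightarrow> nat \<Rightarrow> complex" where
  "rec_bwd p q x0 x1 0 = x0"
| "rec_bwd p q x0 x1 (Suc 0) = (p * x0 - x1) / q"
| "rec_bwd p q x0 x1 (Suc (Suc m)) = (p * rec_bwd p q x0 x1 (Suc m) - rec_bwd p q x0 x1 m) / q"

definition rec_seq :: "complex \<Rightarrow> complex \<Rightarrow> complex \<Rightarrow> complex \<Rightarrow> int \<Rightarrow> complex" where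
  "rec_seq p q x0 x1 n = (if 0 \<le> n then rec_fwd p q x0 x1 (nat n) else rec_bwd p q x0 x1 (nat (- n)))"

definition useq :: "complex \<Rightarrow> complex \<Rightarrow> int \<Rightarrow> complex" where
  "useq p q = rec_seq p q 0 1"

definition hseq :: "complex \<Rightarrow> complex \<Rightarrow> complex \<Rightarrow> complex \<Rightarrow> int \<Rightarrow> complex" where
  "hseq p q a b = rec_seq p q (2 * b - a * p) (b * p - 2 * a * q)"

end

theory Submission
  imports Defs
begin

definition isrec :: "complex \<Rightarrow> complex \<Rightarrow> (int \<Rightarrow> complex) \<Rightarrow> bool" where
  "isrec p q f \<longleftrightarrow> (\<forall>n. f (n + 2) = p * f (n + 1) - q * f n)"

lemma rec_seq_isrec:
  assumes "q \<noteq> 0" shows "isrec p q (rec_seq p q x0 x1)"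
  unfolding isrec_def
proof
  fix n :: int
  show "rec_seq p q x0 x1 (n + 2) = p * rec_seq p q x0 x1 (n + 1) - q * rec_seq p q x0 x1 n"
  proof (cases "n \<ge> 0")
    case True
    then obtain m where m: "n = int m" by (metis nonneg_eq_int)
    have "nat (int m + 2) = Suc (Suc m)" "nat (int m + 1) = Suc m" by auto
    then show ?thesis using m by (simp add: rec_seq_def)
  next
    case False
    show ?thesis
    proof (cases "n = -1")
      case True
      then show ?thesis using assms by (simp add: rec_seq_def)
    next
      case False2: False
      define m where "m = nat (- n - 2)"
      have m: "n = - int m - 2" using False False2 unfolding m_def by simp
      have e: "nat (- (- int m - 2)) = Suc (Suc m)" "nat (- (- int m - 2 + 1)) = Suc m"
        "nat (-(- int m - 2 + 2)) = m" by auto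
      show ?thesis
      proof (cases m)
        case 0
        then show ?thesis using m assms by (simp add: rec_seq_def numeral_2_eq_2 field_simps)
      next
        case (Suc j)
        then show ?thesis using m assms e by (simp add: rec_seq_def)
      qed
    qed
  qed
qed

lemma isrec_unique:
  assumes q: "q \<noteq> 0" and f: "isrec p q f" and g: "isrec p q g"
    and f0: "f 0 = g 0" and f1: "f 1 = g 1"
  shows "f n = g n"
proof -
  have up: "f (int m) = g (int m) \<and> f (int m + 1) = g (int m + 1)" for m
  proof (induction m)
    case 0 then show ?case using f0 f1 by simp
  next
    case (Suc m)
    have "f (int m + 2) = g (int m + 2)"
      using f g Suc unfolding isrec_def by metis
    moreover have e: "int (Suc m) = int m + 1" "int (Suc m) + 1 = int m + 2" by simp_all
    ultimately show ?case using Suc unfolding e(2) unfolding e(1) by blast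
  qed
  have down: "f (- int m) = g (- int m) \<and> f (- int m + 1) = g (- int m + 1)" for m
  proof (induction m)
    case 0 then show ?case using f0 f1 by (simp add: add.commute)
  next
    case (Suc m)
    let ?n = "- int m - 1"
    have ff: "f (?n + 2) = p * f (?n + 1) - q * f ?n" and gg: "g (?n + 2) = p * g (?n + 1) - q * g ?n"
      using f g unfolding isrec_def by blast+
    have a: "?n + 2 = - int m + 1" "?n + 1 = - int m" by auto
    have "q * f ?n = q * g ?n" using ff gg Suc a by (metis add_diff_cancel_left' diff_diff_eq2)
    then have "f ?n = g ?n" using q by simp
    moreover have e: "- int (Suc m) + 1 = - int m" "- int (Suc m) = ?n" by simp_all
    ultimately show ?case using Suc unfolding e(1) unfolding e(2) by blast
  qed
  show ?thesis
  proof (cases "n \<ge> 0")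
    case True then show ?thesis using up by (metis nonneg_eq_int)
  next
    case False then obtain m where "n = - int m" by (metis le_cases minus_minus neg_0_le_iff_le nonneg_eq_int)
    then show ?thesis using down by blast
  qed
qed

lemma geom_isrec:
  assumes "al \<noteq> 0" "al^2 = p * al - q" and that: "be \<noteq> 0" "be^2 = p * be - q"
  shows "isrec p q (\<lambda>n. c * al powi n + e * be powi n)"
  unfolding isrec_def
proof
  fix n :: int
  have h: "al powi (n+2) = al powi n * al^2" "al powi (n+1) = al powi n * al"
    "be powi (n+2) = be powi n * be^2" "be powi (n+1) = be powi n * be"
    using assms that by (simp_all add: power_int_add power2_eq_square)
  have h2: "c * al powi n * al^2 = c * al powi n * (p * al - q)"
    "e * be powi n * be^2 = e * be powi n * (p * be - q)" using assms that by simp_all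
  show "c * al powi (n + 2) + e * be powi (n + 2) = p * (c * al powi (n + 1) + e * be powi (n + 1)) - q * (c * al powi n + e * be powi n)"
    unfolding h using h2 by (simp add: algebra_simps)
qed

theorem mainTheorem15:
  fixes p q a b d :: complex and n k :: int
  assumes "q \<noteq> 0"
    and "d\<^sup>2 = p\<^sup>2 - 4 * q"
  shows "(hseq p q a b (n + k + 1))\<^sup>2 - q powi (2 * k + 1) * (hseq p q a b (n - k))\<^sup>2
       = d\<^sup>2 * useq p q (2 * k + 1) *
         ((b\<^sup>2 - a\<^sup>2 * q) * useq p q (2 * n + 1) - a * q * (2 * b - a * p) * useq p q (2 * n))"
proof -
  define al where "al = (p + d) / 2"
  define be where "be = (p - d) / 2"
  have pq: "p = al + be" "q = al * be" "d = al - be"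
    using assms(2) by (auto simp: al_def be_def field_simps power2_eq_square)
  have al0: "al \<noteq> 0" and be0: "be \<noteq> 0" using assms(1) pq by auto
  have ral: "al^2 = p * al - q" and rbe: "be^2 = p * be - q" using pq by (auto simp: power2_eq_square algebra_simps)
  have hform: "hseq p q a b m = (b - a * be) * al powi m + (b - a * al) * be powi m" for m
    unfolding hseq_def
    by (rule isrec_unique[OF assms(1) rec_seq_isrec[OF assms(1)] geom_isrec[OF al0 ral be0 rbe]])
       (auto simp: rec_seq_def pq algebra_simps)
  define X where "X = al powi n"
  define Y where "Y = be powi n"
  define S where "S = al powi k"
  define T where "T = be powi k"
  have nz: "X \<noteq> 0" "Y \<noteq> 0" "S \<noteq> 0" "T \<noteq> 0" using al0 be0 by (auto simp: X_def Y_def S_def T_def)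
  have pw: "al powi (n+k+1) = X*S*al" "be powi (n+k+1) = Y*T*be"
    "al powi (n-k) = X/S" "be powi (n-k) = Y/T"
    "al powi (2*k+1) = S^2*al" "be powi (2*k+1) = T^2*be"
    "al powi (2*n+1) = X^2*al" "be powi (2*n+1) = Y^2*be"
    "al powi (2*n) = X^2" "be powi (2*n) = Y^2"
    "q powi (2*k+1) = S^2*T^2*al*be"
    using al0 be0 by (auto simp: X_def Y_def S_def T_def pq power_int_add power_int_diff
        power_int_mult power_int_mult_distrib mult.commute)
  show ?thesis
  proof (cases "d = 0")
    case True
    then have ab: "be = al" using pq by simp
    have hh: "hseq p q a b m = (2 * b - 2 * a * al) * al powi m" for m
      using hform[of m] ab by (simp add: algebra_simps)
    have TS: "T = S" using ab by (simp add: T_def S_def)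
    show ?thesis unfolding hh pw TS using True ab nz al0
      by (simp add: field_simps power2_eq_square)
  next
    case False
    have alsub: "al = be + d" using pq by simp
    have uform: "useq p q m = (1/d) * al powi m + (-1/d) * be powi m" for m
      unfolding useq_def
      by (rule isrec_unique[OF assms(1) rec_seq_isrec[OF assms(1)] geom_isrec[OF al0 ral be0 rbe]])
         (use False in \<open>auto simp: rec_seq_def pq(1,2) diff_divide_distrib[symmetric] pq(3)[symmetric]\<close>)
    show ?thesis
      unfolding hform uform pw using nz False unfolding pq(1,2) alsub
      by (simp add: field_simps power2_eq_square)
  qed
qed

end
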